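(* Let $I\subseteq\mathbb{R}$ be an interval, let $f:I\to\mathbb{R}$ be differentiable on the interior $I^\circ$ of $I$, and let $a,b\in I$ with $a<b$ and $f'\in L^1[a,b]$. Let $s\in(0,1]$, $\alpha\in[0,1]$, $m\in(0,1]$, assume $b/m\in I^\circ$, and let $p>1$ and $q=\frac{p}{p-1}$. If $|f'|^q$ is $s$-$(\alpha,m)$-convex (in the first sense) on $[a,b]$, then $$\left|\frac{f(a)+f(b)}{2}-\frac{1}{b-a}\int_a^b f(x)\,dx\right|\le \frac{b-a}{2(p+1)^{1/p}}\left[\frac{|f'(a)|^q+m\alpha s\left|f'\!\left(\frac{b}{m}\right)\right|^q}{\alpha s+1}\right]^{1/q}.$$
   Context: Let $s\in(0,1]$, $\alpha\in[0,1]$, $m\in(0,1]$. A nonnegative function $g$ is called $s$-$(\alpha,m)$-convex (in the first sense) on $[a,b]$ if for all $x,y\in[a,b]$ (with $y/m$ in the domain of $g$) and all $t\in[0,1]$, $$g(tx+(1-t)y)\le t^{\alpha s}g(x)+m\,(1-t^{\alpha s})\,g\!\left(\frac{y}{m}\right).$$ *)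

theory Defs
  imports "HOL-Analysis.Analysis"
begin

text \<open>Real power t^e for t \<ge> 0 with the usual convention 0^0 = 1
  (Isabelle's powr has 0 powr 0 = 0).\<close>
definition rpow :: "real \<Rightarrow> real \<Rightarrow> real" where
  "rpow t e = (if t = 0 \<and> e = 0 then 1 else t powr e)"

text \<open>s-(alpha,m)-convexity in the first sense of a nonnegative function g on [a,b];
  D is the domain of g (the condition is required whenever y/m lies in D).\<close>
definition s_alpha_m_convex ::
  "(real \<Rightarrow> real) \<Rightarrow> real set \<Rightarrow> real \<Rightarrow> real \<Rightarrow> real \<Rightarrow> real \<Rightarrow> real \<Rightarrow> bool" where
  "s_alpha_m_convex g D s \<alpha> m a b \<longleftrightarrow>
     (\<forall>x\<in>{a..b}. g x \<ge> 0) \<and>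
     (\<forall>x\<in>{a..b}. \<forall>y\<in>{a..b}. y / m \<in> D \<longrightarrow> (\<forall>t\<in>{0..1}.
        g (t * x + (1 - t) * y) \<le> rpow t (\<alpha> * s) * g x + m * (1 - rpow t (\<alpha> * s)) * g (y / m)))"

end

theory Submission
  imports Defs
begin

lemma int_right:
  fixes e u v :: real
  assumes e: "e \<ge> 0" and uv: "u \<le> v"
  shows "((\<lambda>x. (x - u) powr e) has_integral (v - u) powr (e + 1) / (e + 1)) {u..v}"
proof -
  have "((\<lambda>x. (x - u) powr e) has_integral ((\<lambda>x. (x - u) powr (e + 1) / (e + 1)) v - (\<lambda>x. (x - u) powr (e + 1) / (e + 1)) u)) {u..v}"
  proof (rule fundamental_theorem_of_calculus_interior[OF uv])
    show "continuous_on {u..v} (\<lambda>x. (x - u) powr (e + 1) / (e + 1))"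
      using e by (intro continuous_intros continuous_on_powr') auto
    fix x assume x: "x \<in> {u<..<v}"
    have "((\<lambda>x. (x - u) powr (e + 1)) has_real_derivative
           ((e + 1) * (x - u) powr (e + 1 - of_nat 1) * 1)) (at x)"
      using x by (intro DERIV_fun_powr derivative_eq_intros) auto
    then have "((\<lambda>x. (x - u) powr (e + 1) / (e + 1)) has_real_derivative
           ((e + 1) * (x - u) powr (e + 1 - of_nat 1) * 1) / (e + 1)) (at x)"
      by (rule DERIV_cdivide)
    then show "((\<lambda>x. (x - u) powr (e + 1) / (e + 1)) has_vector_derivative (x - u) powr e) (at x)"
      using e by (simp add: has_real_derivative_iff_has_vector_derivative)
  qed
  then show ?thesis using e by simp
qed

lemma int_left:
  fixes e u v :: real
  assumes e: "e \<ge> 0" and uv: "u \<le> v"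
  shows "((\<lambda>x. (v - x) powr e) has_integral (v - u) powr (e + 1) / (e + 1)) {u..v}"
proof -
  have "((\<lambda>x. (v - x) powr e) has_integral ((\<lambda>x. - ((v - x) powr (e + 1) / (e + 1))) v - (\<lambda>x. - ((v - x) powr (e + 1) / (e + 1))) u)) {u..v}"
  proof (rule fundamental_theorem_of_calculus_interior[OF uv])
    show "continuous_on {u..v} (\<lambda>x. - ((v - x) powr (e + 1) / (e + 1)))"
      using e by (intro continuous_intros continuous_on_powr') auto
    fix x assume x: "x \<in> {u<..<v}"
    have "((\<lambda>x. (v - x) powr (e + 1)) has_real_derivative
           ((e + 1) * (v - x) powr (e + 1 - of_nat 1) * (0 - 1))) (at x)"
      using x by (intro DERIV_fun_powr derivative_eq_intros) auto
    then have "((\<lambda>x. - ((v - x) powr (e + 1) / (e + 1))) has_real_derivative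
           - (((e + 1) * (v - x) powr (e + 1 - of_nat 1) * (0 - 1)) / (e + 1))) (at x)"
      by (intro DERIV_cdivide DERIV_minus)
    then show "((\<lambda>x. - ((v - x) powr (e + 1) / (e + 1))) has_vector_derivative (v - x) powr e) (at x)"
      using e by (simp add: has_real_derivative_iff_has_vector_derivative)
  qed
  then show ?thesis using e by simp
qed

lemma int_rpow:
  fixes e a b :: real
  assumes e: "e \<ge> 0" and ab: "a < b"
  shows "((\<lambda>x. rpow ((b - x) / (b - a)) e) has_integral (b - a) / (e + 1)) {a..b}"
proof -
  have "((\<lambda>x. (b - x) powr e / (b - a) powr e) has_integral (b - a) powr (e + 1) / (e + 1) / (b - a) powr e) {a..b}"
    using int_left[OF e, of a b] ab by (intro has_integral_divide) auto
  moreover have "(b - a) powr (e + 1) / (e + 1) / (b - a) powr e = (b - a) / (e + 1)"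
    using ab by (simp add: powr_add)
  ultimately have 1: "((\<lambda>x. (b - x) powr e / (b - a) powr e) has_integral (b - a) / (e + 1)) {a..b}"
    by simp
  show ?thesis
  proof (rule has_integral_spike_finite[OF _ _ 1, of "{b}"])
    fix x assume "x \<in> {a..b} - {b}"
    then have "b - x > 0" by auto
    then show "rpow ((b - x) / (b - a)) e = (b - x) powr e / (b - a) powr e"
      using ab by (simp add: rpow_def powr_divide)
  qed auto
qed

lemma int_abs:
  fixes p a b c :: real
  assumes p: "p \<ge> 0" and ab: "a < b" and c: "c = (a + b) / 2"
  shows "((\<lambda>x. \<bar>x - c\<bar> powr p) has_integral 2 * ((b - a) / 2) powr (p + 1) / (p + 1)) {a..b}"
proof -
  have ca: "c - a = (b - a) / 2" "b - c = (b - a) / 2" using c by auto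
  have ac: "a \<le> c" "c \<le> b" using ab c by auto
  have 1: "((\<lambda>x. \<bar>x - c\<bar> powr p) has_integral ((b - a) / 2) powr (p + 1) / (p + 1)) {a..c}"
  proof -
    have "((\<lambda>x. (c - x) powr p) has_integral (c - a) powr (p + 1) / (p + 1)) {a..c}"
      using int_left[OF p ac(1)] .
    then show ?thesis unfolding ca
      by (subst has_integral_cong) auto
  qed
  have 2: "((\<lambda>x. \<bar>x - c\<bar> powr p) has_integral ((b - a) / 2) powr (p + 1) / (p + 1)) {c..b}"
  proof -
    have "((\<lambda>x. (x - c) powr p) has_integral (b - c) powr (p + 1) / (p + 1)) {c..b}"
      using int_right[OF p ac(2)] .
    then show ?thesis unfolding ca
      by (subst has_integral_cong) auto
  qed
  have "c \<ge> a" "c \<le> b" using ab c by auto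
  from has_integral_combine[OF this 1 2] show ?thesis by simp
qed
lemma alg1:
  fixes P Q p q l :: real
  assumes P: "P > 0" and Q: "Q > 0" and p: "p > 1" and q: "q = p / (p - 1)"
    and l: "l = (Q / P) powr (1 / (p * q))"
  shows "l powr p * P / p + Q / (l powr q * q) = P powr (1 / p) * Q powr (1 / q)"
proof -
  have q1: "1 / q = (p - 1) / p" using p q by simp
  have pq: "1 / p + 1 / q = 1"
    unfolding q1 using p by (simp add: diff_divide_distrib)
  have qpos: "q > 0" using p q by simp
  have lp: "l powr p = (Q/P) powr (1/q)"
  proof -
    have "1 / (p * q) * p = 1 / q" using p by simp
    then show ?thesis unfolding l by (simp add: powr_powr)
  qed
  have lq: "l powr q = (Q/P) powr (1/p)"
  proof -
    have "1 / (p * q) * q = 1 / p" using qpos by simp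
    then show ?thesis unfolding l by (simp add: powr_powr)
  qed
  have Pe: "P = P powr (1/p) * P powr (1/q)"
    using P by (simp flip: powr_add add: pq)
  have Qe: "Q = Q powr (1/p) * Q powr (1/q)"
    using Q by (simp flip: powr_add add: pq)
  define M where "M = P powr (1 / p) * Q powr (1 / q)"
  have 1: "l powr p * P = M"
  proof -
    have "l powr p * P = Q powr (1/q) / P powr (1/q) * (P powr (1/p) * P powr (1/q))"
      using P Q Pe lp by (simp add: powr_divide)
    also have "\<dots> = M" using P unfolding M_def by simp
    finally show ?thesis .
  qed
  have 2: "Q / l powr q = M"
  proof -
    have "Q / l powr q = (Q powr (1/p) * Q powr (1/q)) / (Q powr (1/p) / P powr (1/p))"
      using P Q Qe lq by (simp add: powr_divide)
    also have "\<dots> = M" using Q unfolding M_def by simp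
    finally show ?thesis .
  qed
  have "l powr p * P / p + Q / (l powr q * q) = M / p + M / q"
    using 1 2 by (metis divide_divide_eq_left times_divide_eq_right)
  also have "\<dots> = M * (1/p + 1/q)" by (simp add: distrib_left)
  finally show ?thesis using pq M_def by simp
qed
lemma alg2:
  fixes a b K p q :: real
  assumes ab: "a < b" and K: "K > 0" and p: "p > 1" and q: "q = p / (p - 1)"
  shows "(2 * ((b - a) / 2) powr (p + 1) / (p + 1)) powr (1 / p) * ((b - a) * K) powr (1 / q) / (b - a)
       = (b - a) / (2 * (p + 1) powr (1 / p)) * K powr (1 / q)"
proof -
  define h where "h = (b - a) / 2"
  have h: "h > 0" using ab h_def by simp
  have ba: "b - a = 2 * h" using h_def by simp
  have q1: "1 / q = (p - 1) / p" using p q by simp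
  have pq: "1 / p + 1 / q = 1"
    unfolding q1 using p by (simp add: diff_divide_distrib)
  have e1: "(2 * h powr (p + 1) / (p + 1)) powr (1 / p) = 2 powr (1/p) * h powr ((p+1)/p) / (p + 1) powr (1/p)"
    using h p by (simp add: powr_divide powr_mult powr_powr)
  have e2: "((2*h) * K) powr (1 / q) = 2 powr (1/q) * h powr (1/q) * K powr (1/q)"
    using h K by (simp add: powr_mult)
  have e3: "2 powr (1/p) * 2 powr (1/q) = (2::real)"
    by (simp flip: powr_add add: pq)
  have "(p+1)/p + 1/q = 2" unfolding q1 using p by (simp add: field_simps)
  then have e4: "h powr ((p+1)/p) * h powr (1/q) = h * h"
    using h by (simp flip: powr_add add: power2_eq_square)
  have "(2 * h powr (p + 1) / (p + 1)) powr (1 / p) * ((2*h) * K) powr (1 / q) / (2*h)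
     = (2 powr (1/p) * 2 powr (1/q)) * (h powr ((p+1)/p) * h powr (1/q)) * K powr (1/q) / ((p + 1) powr (1/p) * (2*h))"
    unfolding e1 e2 by (simp add: field_simps)
  also have "\<dots> = (2*h) / (2 * (p + 1) powr (1 / p)) * K powr (1 / q)"
    unfolding e3 e4 using h by (simp add: field_simps)
  finally show ?thesis unfolding ba by simp
qed

theorem theorem2:
  fixes I :: "real set" and f f' :: "real \<Rightarrow> real"
    and a b s \<alpha> m p q :: real
  assumes I: "is_interval I"
    and deriv: "\<And>x. x \<in> interior I \<Longrightarrow> (f has_real_derivative f' x) (at x)"
    and ab: "a \<in> interior I" "b \<in> interior I" "a < b"
    and L1: "f' absolutely_integrable_on {a..b}"
    and s: "0 < s" "s \<le> 1"
    and \<alpha>: "0 \<le> \<alpha>" "\<alpha> \<le> 1"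
    and m: "0 < m" "m \<le> 1"
    and bm: "b / m \<in> interior I"
    and p: "p > 1" and q: "q = p / (p - 1)"
    and cvx: "s_alpha_m_convex (\<lambda>x. \<bar>f' x\<bar> powr q) (interior I) s \<alpha> m a b"
  shows "\<bar>(f a + f b) / 2 - integral {a..b} f / (b - a)\<bar>
         \<le> (b - a) / (2 * (p + 1) powr (1 / p)) *
           ((\<bar>f' a\<bar> powr q + m * \<alpha> * s * \<bar>f' (b / m)\<bar> powr q) / (\<alpha> * s + 1)) powr (1 / q)"
proof -
  define c where "c = (a + b) / 2"
  define e where "e = \<alpha> * s"
  define A where "A = \<bar>f' a\<bar> powr q"
  define B where "B = \<bar>f' (b / m)\<bar> powr q"
  define K where "K = (A + m * \<alpha> * s * B) / (\<alpha> * s + 1)"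
  define G where "G = (\<lambda>x. rpow ((b - x) / (b - a)) e * A + m * (1 - rpow ((b - x) / (b - a)) e) * B)"
  have e0: "e \<ge> 0" unfolding e_def using \<alpha> s by simp
  have A0: "A \<ge> 0" "B \<ge> 0" unfolding A_def B_def by auto
  have K0: "K \<ge> 0" unfolding K_def using A0 m \<alpha> s by simp
  have q1: "1 / q = (p - 1) / p" using p q by simp
  have pq: "1 / p + 1 / q = 1"
    unfolding q1 using p by (simp add: diff_divide_distrib)
  have qgt: "q > 1" using p q by simp
  have sub: "{a..b} \<subseteq> interior I"
  proof -
    have "convex (interior I)" using is_interval_convex[OF I] by simp
    then have "closed_segment a b \<subseteq> interior I"
      using ab by (simp add: closed_segment_subset)
    then show ?thesis using ab by (simp add: closed_segment_eq_real_ivl)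
  qed
  have der: "\<And>x. x \<in> {a..b} \<Longrightarrow> (f has_real_derivative f' x) (at x)"
    using sub deriv by blast
  have FTC0: "((\<lambda>x. f x + (x - c) * f' x) has_integral ((\<lambda>x. (x - c) * f x) b - (\<lambda>x. (x - c) * f x) a)) {a..b}"
  proof (rule fundamental_theorem_of_calculus)
    show "a \<le> b" using ab by simp
    fix x assume x: "x \<in> {a..b}"
    have "((\<lambda>x. (x - c) * f x) has_real_derivative ((1 - 0) * f x + f' x * (x - c))) (at x)"
      by (intro DERIV_mult derivative_intros der x)
    then show "((\<lambda>x. (x - c) * f x) has_vector_derivative f x + (x - c) * f' x) (at x within {a..b})"
      by (simp add: has_real_derivative_iff_has_vector_derivative has_vector_derivative_at_within algebra_simps)
  qed
  then have FTC: "((\<lambda>x. f x + (x - c) * f' x) has_integral ((b - c) * f b - (a - c) * f a)) {a..b}"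
    by simp
  have fint: "f integrable_on {a..b}"
    by (intro integrable_continuous_interval continuous_at_imp_continuous_on)
      (use der DERIV_isCont in blast)
  define J where "J = (b - a) * (f a + f b) / 2 - integral {a..b} f"
  have kint: "((\<lambda>x. (x - c) * f' x) has_integral J) {a..b}"
  proof -
    have "((\<lambda>x. (f x + (x - c) * f' x) - f x) has_integral ((b - c) * f b - (a - c) * f a) - integral {a..b} f) {a..b}"
      by (intro has_integral_diff FTC integrable_integral fint)
    moreover have "(b - c) * f b - (a - c) * f a - integral {a..b} f = J"
      unfolding J_def c_def by (simp add: field_simps)
    ultimately show ?thesis by simp
  qed
  have LHS: "\<bar>(f a + f b) / 2 - integral {a..b} f / (b - a)\<bar> = \<bar>J\<bar> / (b - a)"
    unfolding J_def using ab by (simp add: field_simps)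
  have pw: "\<bar>f' x\<bar> powr q \<le> G x" if x: "x \<in> {a..b}" for x
  proof -
    define t where "t = (b - x) / (b - a)"
    have t: "t \<in> {0..1}" using x ab unfolding t_def by (auto simp: field_simps)
    have d: "b - a \<noteq> 0" using ab by simp
    have t1: "1 - t = (x - a) / (b - a)" unfolding t_def using d by (simp add: field_simps)
    have "t * a + (1 - t) * b = ((b - x) * a + (x - a) * b) / (b - a)"
      unfolding t1 unfolding t_def by (simp add: add_divide_distrib)
    also have "(b - x) * a + (x - a) * b = x * (b - a)" by (simp add: algebra_simps)
    finally have tx: "t * a + (1 - t) * b = x" using d by simp
    have "\<bar>f' (t * a + (1 - t) * b)\<bar> powr q \<le> rpow t (\<alpha> * s) * \<bar>f' a\<bar> powr q + m * (1 - rpow t (\<alpha> * s)) * \<bar>f' (b / m)\<bar> powr q"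
      using cvx ab bm t unfolding s_alpha_m_convex_def by auto
    then show ?thesis unfolding G_def tx t_def[symmetric] A_def B_def e_def .
  qed
  have Gint: "(G has_integral (b - a) * K) {a..b}"
  proof -
    have "((\<lambda>x. m * B + (A - m * B) * rpow ((b - x) / (b - a)) e) has_integral
            (b - a) * (m * B) + (A - m * B) * ((b - a) / (e + 1))) {a..b}"
    proof -
      have c1: "((\<lambda>x. m * B) has_integral (b - a) * (m * B)) {a..b}"
        using has_integral_const_real[of "m * B" a b] ab by simp
      show ?thesis
        by (rule has_integral_add[OF c1 has_integral_mult_right[OF int_rpow[OF e0 ab(3)]]])
    qed
    moreover have "(b - a) * (m * B) + (A - m * B) * ((b - a) / (e + 1)) = (b - a) * K"
      unfolding K_def e_def using e0 unfolding e_def by (simp add: field_simps)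
    moreover have "(\<lambda>x. m * B + (A - m * B) * rpow ((b - x) / (b - a)) e) = G"
      unfolding G_def by (simp add: fun_eq_iff algebra_simps)
    ultimately show ?thesis by simp
  qed
  have RHSeq: "(b - a) / (2 * (p + 1) powr (1 / p)) *
           ((\<bar>f' a\<bar> powr q + m * \<alpha> * s * \<bar>f' (b / m)\<bar> powr q) / (\<alpha> * s + 1)) powr (1 / q)
        = (b - a) / (2 * (p + 1) powr (1 / p)) * K powr (1 / q)"
    unfolding K_def A_def B_def ..
  show ?thesis
  proof (cases "K = 0")
    case True
    have s1: "A + m * e * B = 0"
      using True e0 unfolding K_def e_def by (simp add: mult.assoc mult.left_commute)
    have s2: "m * e * B \<ge> 0" using m e0 A0 by simp
    have "A = 0" "m * e * B = 0" using s1 s2 A0 by linarith+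
    then have G0: "G x = 0" for x
      unfolding G_def by (cases "e = 0") (auto simp: rpow_def)
    have "f' x = 0" if "x \<in> {a..b}" for x
    proof -
      have "\<bar>f' x\<bar> powr q = 0" using pw[OF that] G0[of x] by (simp add: order_antisym)
      then show ?thesis by simp
    qed
    then have "((\<lambda>x. (x - c) * f' x) has_integral 0) {a..b}" 
      by (subst has_integral_cong[of _ _ "\<lambda>x. 0"]) auto
    then have "J = 0" using kint has_integral_unique by blast
    then show ?thesis unfolding LHS RHSeq using True by simp
  next
    case False
    then have Kpos: "K > 0" using K0 by simp
    define P where "P = 2 * ((b - a) / 2) powr (p + 1) / (p + 1)"
    define Q where "Q = (b - a) * K"
    have Ppos: "P > 0" unfolding P_def using ab p by simp
    have Qpos: "Q > 0" unfolding Q_def using ab Kpos by simp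
    define l where "l = (Q / P) powr (1 / (p * q))"
    have lpos: "l > 0" unfolding l_def using Ppos Qpos by simp
    have Pint: "((\<lambda>x. \<bar>x - c\<bar> powr p) has_integral P) {a..b}"
      unfolding P_def using p ab by (intro int_abs c_def) auto
    define H where "H = (\<lambda>x. l powr p * \<bar>x - c\<bar> powr p / p + G x / (l powr q * q))"
    have Hint: "(H has_integral (l powr p * P / p + Q / (l powr q * q))) {a..b}"
      unfolding H_def Q_def
      by (intro has_integral_add has_integral_divide has_integral_mult_right Pint Gint)
    have bound: "norm ((x - c) * f' x) \<le> H x" if x: "x \<in> {a..b}" for x
    proof -
      have "(l * \<bar>x - c\<bar>) * (\<bar>f' x\<bar> / l) \<le> (l * \<bar>x - c\<bar>) powr p / p + (\<bar>f' x\<bar> / l) powr q / q"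
        by (rule Youngs_inequality) (use p qgt pq lpos in auto)
      also have "\<dots> = l powr p * \<bar>x - c\<bar> powr p / p + \<bar>f' x\<bar> powr q / (l powr q * q)"
        using lpos by (simp add: powr_mult powr_divide)
      also have "\<dots> \<le> H x"
        unfolding H_def using pw[OF x] lpos qgt by (intro add_left_mono divide_right_mono) auto
      finally show ?thesis using lpos by (simp add: abs_mult)
    qed
    have "norm (integral {a..b} (\<lambda>x. (x - c) * f' x)) \<le> integral {a..b} H"
      by (rule integral_norm_bound_integral) (use kint Hint bound in auto)
    then have "\<bar>J\<bar> \<le> l powr p * P / p + Q / (l powr q * q)"
      using kint Hint by (simp add: integral_unique)
    also have "\<dots> = P powr (1 / p) * Q powr (1 / q)"
      by (rule alg1[OF Ppos Qpos p q l_def])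
    finally have "\<bar>J\<bar> / (b - a) \<le> P powr (1 / p) * Q powr (1 / q) / (b - a)"
      using ab by (simp add: divide_right_mono)
    also have "\<dots> = (b - a) / (2 * (p + 1) powr (1 / p)) * K powr (1 / q)"
      unfolding P_def Q_def by (rule alg2[OF ab(3) Kpos p q])
    finally show ?thesis unfolding LHS RHSeq .
  qed
qed

end
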